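(* Let $G$ be a finite simple undirected graph, $r<s$ positive integers, and run set-k on $(G,r,s)$. For every positive integer $k$ for which the transition time $t_k$ is defined, the $k$-$(r,s)$-nuclei of $G$ are exactly the sets $\mathcal{L}(C)$, where $C$ ranges over the connected components of the supergraph $\mathcal{G}_{t_k}$ and $\mathcal{L}(C)$ is the set of $K_s$s associated with the links of $C$.
   Context: A $K_r$ is an $r$-clique of $G$. For a set $\mathcal{S}$ of $K_s$s: $K_r(\mathcal{S})$ is the set of $K_r$s contained in some member of $\mathcal{S}$; the $\mathcal{S}$-degree of $R\in K_r(\mathcal{S})$ is the number of $S\in\mathcal{S}$ containing $R$; $R,R'$ are $\mathcal{S}$-connected if there is a sequence $R=R_1,\dots,R_m=R'$ in $K_r(\mathcal{S})$ with each $R_i\cup R_{i+1}$ contained in some $S\in\mathcal{S}$. A $k$-$(r,s)$-nucleus is a set $\mathcal{S}$ of $K_s$s, maximal under inclusion among those such that every $R\in K_r(\mathcal{S})$ has $\mathcal{S}$-degree $\ge k$ and any two members of $K_r(\mathcal{S})$ are $\mathcal{S}$-connected. Procedure set-k$(G,r,s)$: enumerate all $K_r$s and $K_s$s; initialize $\delta(R)$ to the number of $K_s$s containing $R$; all $K_r$s unprocessed. Repeat until all processed: pick an unprocessed $K_r$ $R$ with minimum current $\delta(R)$ (ties arbitrary); set $\kappa(R)=\delta(R)$; for each $K_s$ $S\ni R$ such that no $K_r\subset S$ is processed, and for each $K_r$ $R'\subset S$, $R'\neq R$, with $\delta(R')>\delta(R)$, decrease $\delta(R')$ by 1; mark $R$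 processed. $R_i$ is the $i$-th processed $K_r$; "time $t$" is the beginning of the iteration processing $R_t$. The transition time $t_k$ is the unique index with $\kappa(R_{t_k})=k$ and ($t_k=1$ or $\kappa(R_{t_k-1})<k$). $\mathcal{S}_t$ is the set of $K_s$s all of whose $K_r$s are unprocessed at time $t$. The supergraph $\mathcal{G}_t$ is the multigraph with node set $K_r(\mathcal{S}_t)$ in which, for each $S\in\mathcal{S}_t$ and each pair of distinct $K_r$s $R,R'\subset S$, there is a link between $R$ and $R'$ associated with $S$ (so there may be multiple links between two nodes). *)

theory Defs
  imports Main
begin

definition cliques :: "'a set \<Rightarrow> ('a \<Rightarrow> 'a \<Rightarrow> bool) \<Rightarrow> nat \<Rightarrow> 'a set set" where
  "cliques V E r = {K. K \<subseteq> V \<and> card K = r \<and> (\<forall>x\<in>K. \<forall>y\<in>K. x \<noteq> y \<longrightarrow> E x y)}"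

definition Kr_of :: "'a set \<Rightarrow> ('a \<Rightarrow> 'a \<Rightarrow> bool) \<Rightarrow> nat \<Rightarrow> 'a set set \<Rightarrow> 'a set set" where
  "Kr_of V E r SS = {R \<in> cliques V E r. \<exists>S\<in>SS. R \<subseteq> S}"

definition sdeg :: "'a set set \<Rightarrow> 'a set \<Rightarrow> nat" where
  "sdeg SS R = card {S \<in> SS. R \<subseteq> S}"

definition s_step :: "'a set \<Rightarrow> ('a \<Rightarrow> 'a \<Rightarrow> bool) \<Rightarrow> nat \<Rightarrow> 'a set set \<Rightarrow> ('a set \<times> 'a set) set" where
  "s_step V E r SS = {(R, R'). R \<in> Kr_of V E r SS \<and> R' \<in> Kr_of V E r SS \<and> (\<exists>S\<in>SS. R \<union> R' \<subseteq> S)}"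

definition s_connected :: "'a set \<Rightarrow> ('a \<Rightarrow> 'a \<Rightarrow> bool) \<Rightarrow> nat \<Rightarrow> 'a set set \<Rightarrow> 'a set \<Rightarrow> 'a set \<Rightarrow> bool" where
  "s_connected V E r SS R R' \<longleftrightarrow> R \<in> Kr_of V E r SS \<and> (R, R') \<in> (s_step V E r SS)\<^sup>*"

definition nucleus_cond :: "'a set \<Rightarrow> ('a \<Rightarrow> 'a \<Rightarrow> bool) \<Rightarrow> nat \<Rightarrow> nat \<Rightarrow> nat \<Rightarrow> 'a set set \<Rightarrow> bool" where
  "nucleus_cond V E r s k SS \<longleftrightarrow>
     SS \<subseteq> cliques V E s \<and>
     (\<forall>R\<in>Kr_of V E r SS. sdeg SS R \<ge> k) \<and>
     (\<forall>R\<in>Kr_of V E r SS. \<forall>R'\<in>Kr_of V E r SS. s_connected V E r SS R R')"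

definition is_nucleus :: "'a set \<Rightarrow> ('a \<Rightarrow> 'a \<Rightarrow> bool) \<Rightarrow> nat \<Rightarrow> nat \<Rightarrow> nat \<Rightarrow> 'a set set \<Rightarrow> bool" where
  "is_nucleus V E r s k SS \<longleftrightarrow> nucleus_cond V E r s k SS \<and>
     (\<forall>SS'. nucleus_cond V E r s k SS' \<and> SS \<subseteq> SS' \<longrightarrow> SS' = SS)"

definition alive :: "'a set \<Rightarrow> ('a \<Rightarrow> 'a \<Rightarrow> bool) \<Rightarrow> nat \<Rightarrow> nat \<Rightarrow> 'a set set \<Rightarrow> 'a set set" where
  "alive V E r s P = {S \<in> cliques V E s. \<forall>Q\<in>cliques V E r. Q \<subseteq> S \<longrightarrow> Q \<notin> P}"

definition deg0 :: "'a set \<Rightarrow> ('a \<Rightarrow> 'a \<Rightarrow> bool) \<Rightarrow> nat \<Rightarrow> 'a set \<Rightarrow> nat" where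
  "deg0 V E s R = card {S \<in> cliques V E s. R \<subseteq> S}"

text \<open>For each surviving K_s S containing R and each R' in S, R' different from R, delta(R') is
  decreased by one while it exceeds delta(R); sequential decrements give
  max (delta R) (delta R' - c), where c counts those S containing R and R'.\<close>
definition dstep :: "'a set \<Rightarrow> ('a \<Rightarrow> 'a \<Rightarrow> bool) \<Rightarrow> nat \<Rightarrow> nat \<Rightarrow> 'a set set \<Rightarrow> 'a set
                     \<Rightarrow> ('a set \<Rightarrow> nat) \<Rightarrow> ('a set \<Rightarrow> nat)" where
  "dstep V E r s P R \<delta> = (\<lambda>R'.
     if R' \<in> cliques V E r \<and> R' \<noteq> R \<and> \<delta> R' > \<delta> R
     then max (\<delta> R) (\<delta> R' - card {S \<in> alive V E r s P. R \<subseteq> S \<and> R' \<subseteq> S})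
     else \<delta> R')"

text \<open>delta at (0-indexed) time i of a run processing the K_r's in the order ord:
  the first i elements of ord have been processed.\<close>
primrec delta_at :: "'a set \<Rightarrow> ('a \<Rightarrow> 'a \<Rightarrow> bool) \<Rightarrow> nat \<Rightarrow> nat \<Rightarrow> 'a set list \<Rightarrow> nat
                     \<Rightarrow> ('a set \<Rightarrow> nat)" where
  "delta_at V E r s ord 0 = deg0 V E s"
| "delta_at V E r s ord (Suc i) =
     dstep V E r s (set (take i ord)) (ord ! i) (delta_at V E r s ord i)"

text \<open>ord is a possible processing order of set-k (ties broken arbitrarily).\<close>
definition valid_run :: "'a set \<Rightarrow> ('a \<Rightarrow> 'a \<Rightarrow> bool) \<Rightarrow> nat \<Rightarrow> nat \<Rightarrow> 'a set list \<Rightarrow> bool" where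
  "valid_run V E r s ord \<longleftrightarrow> distinct ord \<and> set ord = cliques V E r \<and>
     (\<forall>i < length ord. \<forall>R \<in> cliques V E r - set (take i ord).
        delta_at V E r s ord i (ord ! i) \<le> delta_at V E r s ord i R)"

text \<open>kappa of the (i+1)-th processed K_r (0-indexed i).\<close>
definition kappa :: "'a set \<Rightarrow> ('a \<Rightarrow> 'a \<Rightarrow> bool) \<Rightarrow> nat \<Rightarrow> nat \<Rightarrow> 'a set list \<Rightarrow> nat \<Rightarrow> nat" where
  "kappa V E r s ord i = delta_at V E r s ord i (ord ! i)"

definition sg_adj :: "'a set \<Rightarrow> ('a \<Rightarrow> 'a \<Rightarrow> bool) \<Rightarrow> nat \<Rightarrow> nat \<Rightarrow> 'a set set \<Rightarrow> ('a set \<times> 'a set) set" where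
  "sg_adj V E r s P = {(R, R'). R \<noteq> R' \<and> R \<in> cliques V E r \<and> R' \<in> cliques V E r \<and>
                         (\<exists>S\<in>alive V E r s P. R \<subseteq> S \<and> R' \<subseteq> S)}"

definition sg_components :: "'a set \<Rightarrow> ('a \<Rightarrow> 'a \<Rightarrow> bool) \<Rightarrow> nat \<Rightarrow> nat \<Rightarrow> 'a set set \<Rightarrow> 'a set set set" where
  "sg_components V E r s P =
     {{R'. (R, R') \<in> (sg_adj V E r s P)\<^sup>*} | R. R \<in> Kr_of V E r (alive V E r s P)}"

definition links_of :: "'a set \<Rightarrow> ('a \<Rightarrow> 'a \<Rightarrow> bool) \<Rightarrow> nat \<Rightarrow> nat \<Rightarrow> 'a set set \<Rightarrow> 'a set set \<Rightarrow> 'a set set" where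
  "links_of V E r s P C = {S \<in> alive V E r s P. \<exists>R\<in>C. \<exists>R'\<in>C. R \<noteq> R' \<and>
       R \<in> cliques V E r \<and> R' \<in> cliques V E r \<and> R \<subseteq> S \<and> R' \<subseteq> S}"

end

theory Submission
  imports Defs
begin


locale setk =
  fixes V :: "'a set" and E :: "'a \<Rightarrow> 'a \<Rightarrow> bool" and r s :: nat and ord :: "'a set list"
  assumes finV: "finite V" and r0: "0 < r" and rs: "r < s" and vr: "valid_run V E r s ord"
begin

abbreviation PP :: "nat \<Rightarrow> 'a set set" where "PP i \<equiv> set (take i ord)"

definition dd :: "nat \<Rightarrow> 'a set \<Rightarrow> nat" where
  "dd i R = card {S \<in> alive V E r s (PP i). R \<subseteq> S}"

definition MM :: "nat \<Rightarrow> nat" where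
  "MM i = (if i = 0 then 0 else kappa V E r s ord (i - 1))"

lemma fin_cl: "finite (cliques V E n)"
  by (rule finite_subset[of _ "Pow V"]) (auto simp: cliques_def finV)

lemma fin_alive: "finite (alive V E r s Q)"
  by (rule finite_subset[OF _ fin_cl[of s]]) (auto simp: alive_def)

lemma alive_insert: "R0 \<in> cliques V E r \<Longrightarrow>
   alive V E r s (insert R0 Q) = {S \<in> alive V E r s Q. \<not> R0 \<subseteq> S}"
  by (auto simp: alive_def)

lemma nth_notin_take: "distinct xs \<Longrightarrow> i < length xs \<Longrightarrow> xs ! i \<notin> set (take i xs)"
proof
  assume d: "distinct xs" and i: "i < length xs" and m: "xs ! i \<in> set (take i xs)"
  then obtain j where j: "j < i" "take i xs ! j = xs ! i"
    by (auto simp: in_set_conv_nth)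
  then have "xs ! j = xs ! i" by simp
  with d i j(1) show False by (simp add: nth_eq_iff_index_eq)
qed

lemma dist: "distinct ord" and setord: "set ord = cliques V E r"
  using vr by (auto simp: valid_run_def)

lemma minprop: "i < length ord \<Longrightarrow> R \<in> cliques V E r - PP i \<Longrightarrow>
    delta_at V E r s ord i (ord ! i) \<le> delta_at V E r s ord i R"
  using vr by (auto simp: valid_run_def)

lemma inv: "i \<le> length ord \<Longrightarrow> \<forall>R \<in> cliques V E r - PP i.
     delta_at V E r s ord i R = max (MM i) (dd i R)"
proof (induction i)
  case 0
  show ?case by (simp add: deg0_def dd_def alive_def MM_def)
next
  case (Suc i)
  then have il: "i < length ord" by simp
  define R0 where "R0 = ord ! i"
  define m where "m = delta_at V E r s ord i R0"
  have PS: "PP (Suc i) = insert R0 (PP i)"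
    using il by (simp add: take_Suc_conv_app_nth R0_def)
  have R0c: "R0 \<in> cliques V E r" using il setord R0_def nth_mem by blast
  have R0n: "R0 \<notin> PP i" using nth_notin_take[OF dist il] R0_def by simp
  have IH: "\<forall>R \<in> cliques V E r - PP i. delta_at V E r s ord i R = max (MM i) (dd i R)"
    using Suc il by simp
  have MS: "MM (Suc i) = m" by (simp add: MM_def kappa_def m_def R0_def)
  have Mm: "MM i \<le> m" using IH R0c R0n m_def by auto
  show ?case
  proof
    fix R' assume R': "R' \<in> cliques V E r - PP (Suc i)"
    then have R'c: "R' \<in> cliques V E r" and R'n: "R' \<notin> PP i" and R'ne: "R' \<noteq> R0"
      using PS by auto
    define c where "c = card {S \<in> alive V E r s (PP i). R0 \<subseteq> S \<and> R' \<subseteq> S}"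
    have "{S \<in> alive V E r s (PP (Suc i)). R' \<subseteq> S} =
          {S \<in> alive V E r s (PP i). R' \<subseteq> S} - {S \<in> alive V E r s (PP i). R0 \<subseteq> S \<and> R' \<subseteq> S}"
      using PS alive_insert[OF R0c] by auto
    then have dS: "dd (Suc i) R' = dd i R' - c"
      unfolding dd_def c_def
      apply (simp only: )
      by (rule card_Diff_subset) (auto intro: finite_subset[OF _ fin_alive])
    have mle: "m \<le> delta_at V E r s ord i R'"
      using minprop[OF il] R'c R'n m_def R0_def by auto
    have dI: "delta_at V E r s ord i R' = max (MM i) (dd i R')" using IH R'c R'n by auto
    have "delta_at V E r s ord (Suc i) R' =
       (if m < delta_at V E r s ord i R' then max m (delta_at V E r s ord i R' - c)
        else delta_at V E r s ord i R')"
      by (simp add: dstep_def R'c R'ne c_def m_def R0_def[symmetric])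
    then show "delta_at V E r s ord (Suc i) R' = max (MM (Suc i)) (dd (Suc i) R')"
      using MS dS mle dI Mm by (auto simp: max_def split: if_splits)
  qed
qed

lemma kmono1: "Suc i < length ord \<Longrightarrow> kappa V E r s ord i \<le> kappa V E r s ord (Suc i)"
proof -
  assume a: "Suc i < length ord"
  have "ord ! Suc i \<in> cliques V E r - PP (Suc i)"
    using a setord nth_mem nth_notin_take[OF dist a] by blast
  then have "kappa V E r s ord (Suc i) = max (MM (Suc i)) (dd (Suc i) (ord ! Suc i))"
    using inv[of "Suc i"] a by (simp add: kappa_def)
  then show ?thesis by (simp add: MM_def)
qed

lemma kmono: "i \<le> j \<Longrightarrow> j < length ord \<Longrightarrow> kappa V E r s ord i \<le> kappa V E r s ord j"
proof (induction j)
  case 0 then show ?case by simp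
next
  case (Suc j)
  then show ?case using kmono1[of j] by (metis Suc_lessD le_Suc_eq le_trans order.refl)
qed

end


locale setk_t = setk +
  fixes k t :: nat
  assumes k0: "0 < k" and tl: "t < length ord" and kt: "kappa V E r s ord t = k"
    and tprev: "t = 0 \<or> kappa V E r s ord (t - 1) < k"
begin

abbreviation AA where "AA \<equiv> alive V E r s (PP t)"
abbreviation adj where "adj \<equiv> sg_adj V E r s (PP t)"
definition comp :: "'a set \<Rightarrow> 'a set set" where "comp R = {R'. (R, R') \<in> adj\<^sup>*}"
definition LL :: "'a set \<Rightarrow> 'a set set" where "LL R = links_of V E r s (PP t) (comp R)"

lemma Mt: "MM t < k" using tprev k0 by (auto simp: MM_def)

lemma kappa_before: "i < t \<Longrightarrow> kappa V E r s ord i < k"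
proof -
  assume i: "i < t"
  then have "t \<noteq> 0" by simp
  then have "kappa V E r s ord (t - 1) < k" using tprev by simp
  moreover have "kappa V E r s ord i \<le> kappa V E r s ord (t - 1)"
    by (rule kmono) (use i tl in auto)
  ultimately show ?thesis by simp
qed

lemma dd_ge: "R \<in> cliques V E r - PP t \<Longrightarrow> k \<le> dd t R"
proof -
  assume a: "R \<in> cliques V E r - PP t"
  have "k \<le> delta_at V E r s ord t R" using minprop[OF tl a] kt by (simp add: kappa_def)
  also have "\<dots> = max (MM t) (dd t R)" using inv[of t] tl a by auto
  finally show ?thesis using Mt by auto
qed

lemma sub_clique: "Q \<subseteq> S \<Longrightarrow> S \<in> cliques V E n \<Longrightarrow> card Q = m \<Longrightarrow> Q \<in> cliques V E m"
  by (auto simp: cliques_def)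

lemma sub_r: "S \<in> cliques V E s \<Longrightarrow> \<exists>Q \<in> cliques V E r. Q \<subseteq> S"
proof -
  assume S: "S \<in> cliques V E s"
  then have "r \<le> card S" using rs by (simp add: cliques_def)
  then obtain Q where "Q \<subseteq> S" "card Q = r" by (rule obtain_subset_with_card_n)
  then show ?thesis using sub_clique[OF _ S] by blast
qed

lemma other: "S \<in> cliques V E s \<Longrightarrow> Q \<in> cliques V E r \<Longrightarrow> Q \<subseteq> S \<Longrightarrow>
   \<exists>Q' \<in> cliques V E r. Q' \<subseteq> S \<and> Q' \<noteq> Q"
proof -
  assume S: "S \<in> cliques V E s" and Q: "Q \<in> cliques V E r" and QS: "Q \<subseteq> S"
  have fS: "finite S" by (rule finite_subset[of _ V]) (use S finV in \<open>auto simp: cliques_def\<close>)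
  have cQ: "card Q = r" and cS: "card S = s" using Q S by (auto simp: cliques_def)
  have fQ: "finite Q" using QS fS finite_subset by blast
  have "Q \<noteq> S" using cQ cS rs by auto
  then obtain x where x: "x \<in> S" "x \<notin> Q" using QS by blast
  have "Q \<noteq> {}" using cQ r0 by auto
  then obtain y where y: "y \<in> Q" by blast
  define Q' where "Q' = insert x (Q - {y})"
  have "x \<notin> Q - {y}" using x by simp
  then have "card Q' = Suc (card (Q - {y}))" using fQ by (simp add: Q'_def)
  then have "card Q' = r" using fQ y cQ r0 by (simp add: card_Diff_singleton)
  moreover have QS': "Q' \<subseteq> S" using QS x y by (auto simp: Q'_def)
  ultimately have "Q' \<in> cliques V E r" using sub_clique[OF QS' S] by simp
  moreover have "Q' \<noteq> Q" using x by (auto simp: Q'_def)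
  ultimately show ?thesis using QS' by blast
qed

lemma alive_nodes: "R \<in> Kr_of V E r AA \<Longrightarrow> R \<in> cliques V E r - PP t"
  by (auto simp: Kr_of_def alive_def)


lemma F3: "nucleus_cond V E r s k SS \<Longrightarrow> SS \<subseteq> AA"
proof (rule ccontr)
  assume nc: "nucleus_cond V E r s k SS" and ns: "\<not> SS \<subseteq> AA"
  have SSc: "SS \<subseteq> cliques V E s" using nc by (simp add: nucleus_cond_def)
  then obtain S Q where S: "S \<in> SS" and Q: "Q \<in> cliques V E r" "Q \<subseteq> S" "Q \<in> PP t"
    using ns by (auto simp: alive_def)
  obtain i0 where i0: "i0 < t" "ord ! i0 = Q"
    using Q(3) tl by (auto simp: in_set_conv_nth)
  have QK: "Q \<in> Kr_of V E r SS" using Q S by (auto simp: Kr_of_def)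
  define i where "i = (LEAST i. ord ! i \<in> Kr_of V E r SS)"
  have iK: "ord ! i \<in> Kr_of V E r SS" unfolding i_def by (rule LeastI[of _ i0]) (use i0 QK in auto)
  have ii0: "i \<le> i0" unfolding i_def by (rule Least_le) (use i0 QK in auto)
  have it: "i < t" using ii0 i0 by simp
  have il: "i < length ord" using it tl by simp
  have before: "\<And>j. j < i \<Longrightarrow> ord ! j \<notin> Kr_of V E r SS"
    unfolding i_def using not_less_Least by blast
  have disj: "PP i \<inter> Kr_of V E r SS = {}"
    using before il by (auto simp: in_set_conv_nth)
  have SSA: "SS \<subseteq> alive V E r s (PP i)"
  proof
    fix S' assume S': "S' \<in> SS"
    show "S' \<in> alive V E r s (PP i)"
      using S' SSc disj by (auto simp: alive_def Kr_of_def)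
  qed
  define R where "R = ord ! i"
  have Rc: "R \<in> cliques V E r - PP i"
    using iK nth_notin_take[OF dist il] R_def by (auto simp: Kr_of_def)
  have "k \<le> sdeg SS R" using nc iK R_def by (auto simp: nucleus_cond_def)
  also have "\<dots> \<le> dd i R" unfolding sdeg_def dd_def
    by (rule card_mono[OF finite_subset[OF _ fin_alive]]) (use SSA in auto)
  also have "\<dots> \<le> max (MM i) (dd i R)" by simp
  also have "\<dots> = kappa V E r s ord i"
    using inv[of i] il Rc by (simp add: kappa_def R_def)
  finally show False using kappa_before[OF it] by simp
qed

lemma adj_sym: "(a, b) \<in> adj \<Longrightarrow> (b, a) \<in> adj"
  by (auto simp: sg_adj_def)

lemma adj_star_sym: "(a, b) \<in> adj\<^sup>* \<Longrightarrow> (b, a) \<in> adj\<^sup>*"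
proof (induction rule: rtrancl_induct)
  case base then show ?case by simp
next
  case (step y z) then show ?case using adj_sym converse_rtrancl_into_rtrancl by metis
qed

lemma comp_nodes: "R \<in> Kr_of V E r AA \<Longrightarrow> Q \<in> comp R \<Longrightarrow> Q \<in> Kr_of V E r AA"
  unfolding comp_def
proof -
  assume R: "R \<in> Kr_of V E r AA" and "Q \<in> {R'. (R, R') \<in> adj\<^sup>*}"
  then have "(R, Q) \<in> adj\<^sup>*" by simp
  then show "Q \<in> Kr_of V E r AA"
  proof (induction rule: rtrancl_induct)
    case base then show ?case using R .
  next
    case (step y z) then show ?case by (auto simp: sg_adj_def Kr_of_def)
  qed
qed

lemma La: "R \<in> Kr_of V E r AA \<Longrightarrow> S \<in> AA \<Longrightarrow> Q \<in> comp R \<Longrightarrow> Q \<in> cliques V E r \<Longrightarrow> Q \<subseteq> S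
   \<Longrightarrow> S \<in> LL R"
proof -
  assume R: "R \<in> Kr_of V E r AA" and S: "S \<in> AA" and Q: "Q \<in> comp R" "Q \<in> cliques V E r" "Q \<subseteq> S"
  have Sc: "S \<in> cliques V E s" using S by (simp add: alive_def)
  obtain Q' where Q': "Q' \<in> cliques V E r" "Q' \<subseteq> S" "Q' \<noteq> Q" using other[OF Sc Q(2,3)] by blast
  have "(Q, Q') \<in> adj" using Q Q' S by (auto simp: sg_adj_def)
  then have "Q' \<in> comp R" using Q(1) by (auto simp: comp_def)
  then show ?thesis unfolding LL_def links_of_def using Q Q' S by blast
qed

lemma LA: "S \<in> LL R \<Longrightarrow> S \<in> AA" by (simp add: LL_def links_of_def)

lemma KrL: "R \<in> Kr_of V E r AA \<Longrightarrow> Kr_of V E r (LL R) = comp R"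
proof
  assume R: "R \<in> Kr_of V E r AA"
  show "Kr_of V E r (LL R) \<subseteq> comp R"
  proof
    fix Q assume "Q \<in> Kr_of V E r (LL R)"
    then obtain S where Q: "Q \<in> cliques V E r" "S \<in> LL R" "Q \<subseteq> S" by (auto simp: Kr_of_def)
    then obtain R1 where R1: "R1 \<in> comp R" "R1 \<subseteq> S" "R1 \<in> cliques V E r" "S \<in> AA"
      by (auto simp: LL_def links_of_def)
    show "Q \<in> comp R"
    proof (cases "Q = R1")
      case True then show ?thesis using R1 by simp
    next
      case False
      then have "(R1, Q) \<in> adj" using Q R1 by (auto simp: sg_adj_def)
      then show ?thesis using R1(1) by (auto simp: comp_def)
    qed
  qed
  show "comp R \<subseteq> Kr_of V E r (LL R)"
  proof
    fix Q assume Q: "Q \<in> comp R"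
    then have "Q \<in> Kr_of V E r AA" using comp_nodes R by blast
    then obtain S where "S \<in> AA" "Q \<subseteq> S" "Q \<in> cliques V E r" by (auto simp: Kr_of_def)
    then show "Q \<in> Kr_of V E r (LL R)" using La[OF R _ Q] by (auto simp: Kr_of_def)
  qed
qed

lemma path: "(Q, b) \<in> adj\<^sup>* \<Longrightarrow> R \<in> Kr_of V E r AA \<Longrightarrow> Q \<in> comp R \<Longrightarrow>
   (Q, b) \<in> (s_step V E r (LL R))\<^sup>*"
proof (induction rule: rtrancl_induct)
  case base then show ?case by simp
next
  case (step y z)
  then have "y \<in> comp R" by (auto simp: comp_def)
  then have yz: "z \<in> comp R" using step(2) by (auto simp: comp_def)
  obtain S where S: "S \<in> AA" "y \<subseteq> S" "z \<subseteq> S" "y \<in> cliques V E r" "z \<in> cliques V E r"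
    using step(2) by (auto simp: sg_adj_def)
  have SL: "S \<in> LL R" using La[OF step(4) S(1) \<open>y \<in> comp R\<close> S(4,2)] .
  have "(y, z) \<in> s_step V E r (LL R)"
    using S SL by (auto simp: s_step_def Kr_of_def)
  then show ?case using step by (meson rtrancl.rtrancl_into_rtrancl)
qed

lemma L_cond: "R \<in> Kr_of V E r AA \<Longrightarrow> nucleus_cond V E r s k (LL R)"
proof -
  assume R: "R \<in> Kr_of V E r AA"
  have c1: "LL R \<subseteq> cliques V E s" using LA by (auto simp: alive_def)
  have c2: "\<forall>Q\<in>Kr_of V E r (LL R). k \<le> sdeg (LL R) Q"
  proof
    fix Q assume "Q \<in> Kr_of V E r (LL R)"
    then have Q: "Q \<in> comp R" using KrL[OF R] by simp
    have QA: "Q \<in> Kr_of V E r AA" using comp_nodes[OF R Q] .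
    have Qc: "Q \<in> cliques V E r" using QA by (simp add: Kr_of_def)
    have "{S \<in> LL R. Q \<subseteq> S} = {S \<in> AA. Q \<subseteq> S}"
      using La[OF R _ Q Qc] LA by blast
    then have "sdeg (LL R) Q = dd t Q" by (simp add: sdeg_def dd_def)
    then show "k \<le> sdeg (LL R) Q" using dd_ge alive_nodes[OF QA] by simp
  qed
  have c3: "\<forall>Q\<in>Kr_of V E r (LL R). \<forall>Q'\<in>Kr_of V E r (LL R). s_connected V E r (LL R) Q Q'"
  proof (intro ballI)
    fix Q Q' assume a: "Q \<in> Kr_of V E r (LL R)" "Q' \<in> Kr_of V E r (LL R)"
    then have Q: "Q \<in> comp R" and Q': "Q' \<in> comp R" using KrL[OF R] by auto
    have "(Q, R) \<in> adj\<^sup>*" using Q adj_star_sym by (auto simp: comp_def)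
    moreover have "(R, Q') \<in> adj\<^sup>*" using Q' by (auto simp: comp_def)
    ultimately have "(Q, Q') \<in> adj\<^sup>*" by simp
    then show "s_connected V E r (LL R) Q Q'"
      using path[OF _ R Q] a by (simp add: s_connected_def)
  qed
  show ?thesis using c1 c2 c3 by (simp add: nucleus_cond_def)
qed

lemma absorb: "nucleus_cond V E r s k SS \<Longrightarrow> R \<in> Kr_of V E r SS \<Longrightarrow>
   R \<in> Kr_of V E r AA \<and> SS \<subseteq> LL R"
proof -
  assume nc: "nucleus_cond V E r s k SS" and R: "R \<in> Kr_of V E r SS"
  have SSA: "SS \<subseteq> AA" using F3[OF nc] .
  have RA: "R \<in> Kr_of V E r AA" using R SSA by (auto simp: Kr_of_def)
  have sub: "s_step V E r SS \<subseteq> adj\<^sup>="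
    using SSA by (auto simp: s_step_def sg_adj_def Kr_of_def)
  have "SS \<subseteq> LL R"
  proof
    fix S assume S: "S \<in> SS"
    then have Sc: "S \<in> cliques V E s" using nc by (auto simp: nucleus_cond_def)
    obtain Q where Q: "Q \<in> cliques V E r" "Q \<subseteq> S" using sub_r[OF Sc] by blast
    then have QK: "Q \<in> Kr_of V E r SS" using S by (auto simp: Kr_of_def)
    then have "(R, Q) \<in> (s_step V E r SS)\<^sup>*"
      using nc R by (auto simp: nucleus_cond_def s_connected_def)
    then have "(R, Q) \<in> (adj\<^sup>=)\<^sup>*" using rtrancl_mono[OF sub] by blast
    then have "Q \<in> comp R" by (simp add: comp_def)
    then show "S \<in> LL R" using La[OF RA _ _ Q] S SSA by blast
  qed
  then show ?thesis using RA by simp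
qed

lemma R_in_L: "R \<in> Kr_of V E r AA \<Longrightarrow> R \<in> Kr_of V E r (LL R)"
  using KrL by (simp add: comp_def)

lemma main: "{SS. is_nucleus V E r s k SS} = LL ` {R. R \<in> Kr_of V E r AA}"
proof
  show "LL ` {R. R \<in> Kr_of V E r AA} \<subseteq> {SS. is_nucleus V E r s k SS}"
  proof
    fix X assume "X \<in> LL ` {R. R \<in> Kr_of V E r AA}"
    then obtain R where R: "R \<in> Kr_of V E r AA" and X: "X = LL R" by blast
    have "\<forall>SS'. nucleus_cond V E r s k SS' \<and> LL R \<subseteq> SS' \<longrightarrow> SS' = LL R"
    proof (intro allI impI)
      fix SS' assume a: "nucleus_cond V E r s k SS' \<and> LL R \<subseteq> SS'"
      then have "R \<in> Kr_of V E r SS'" using R_in_L[OF R] by (auto simp: Kr_of_def)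
      then show "SS' = LL R" using absorb a by blast
    qed
    then show "X \<in> {SS. is_nucleus V E r s k SS}"
      using L_cond[OF R] X by (simp add: is_nucleus_def)
  qed
  show "{SS. is_nucleus V E r s k SS} \<subseteq> LL ` {R. R \<in> Kr_of V E r AA}"
  proof
    fix SS assume "SS \<in> {SS. is_nucleus V E r s k SS}"
    then have nc: "nucleus_cond V E r s k SS"
      and mx: "\<And>SS'. nucleus_cond V E r s k SS' \<Longrightarrow> SS \<subseteq> SS' \<Longrightarrow> SS' = SS"
      by (auto simp: is_nucleus_def)
    show "SS \<in> LL ` {R. R \<in> Kr_of V E r AA}"
    proof (cases "SS = {}")
      case True
      define R0 where "R0 = ord ! t"
      have R0c: "R0 \<in> cliques V E r - PP t"
        using tl setord nth_mem nth_notin_take[OF dist tl] R0_def by blast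
      have "0 < dd t R0" using dd_ge[OF R0c] k0 by simp
      then obtain S where S: "S \<in> AA" "R0 \<subseteq> S" unfolding dd_def
        by (metis (no_types, lifting) card.empty empty_Collect_eq less_irrefl)
      have R0A: "R0 \<in> Kr_of V E r AA" using S R0c by (auto simp: Kr_of_def)
      have "LL R0 = SS" using mx[OF L_cond[OF R0A]] True by simp
      moreover have "S \<in> LL R0"
        using La[OF R0A S(1) _ _ S(2)] R0c by (simp add: comp_def)
      ultimately show ?thesis using True by simp
    next
      case False
      then obtain S where S: "S \<in> SS" by blast
      then have Sc: "S \<in> cliques V E s" using nc by (auto simp: nucleus_cond_def)
      obtain Q where Q: "Q \<in> cliques V E r" "Q \<subseteq> S" using sub_r[OF Sc] by blast
      then have QK: "Q \<in> Kr_of V E r SS" using S by (auto simp: Kr_of_def)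
      from absorb[OF nc QK] have QA: "Q \<in> Kr_of V E r AA" and sub: "SS \<subseteq> LL Q" by auto
      have "LL Q = SS" using mx[OF L_cond[OF QA] sub] .
      then show ?thesis using QA by blast
    qed
  qed
qed

end

theorem lemma2:
  fixes V :: "'a set" and E :: "'a \<Rightarrow> 'a \<Rightarrow> bool"
    and r s k t :: nat and ord :: "'a set list"
  assumes "finite V"
    and "\<And>x y. E x y \<Longrightarrow> E y x"
    and "\<And>x. \<not> E x x"
    and "0 < r" and "r < s"
    and "valid_run V E r s ord"
    and "0 < k"
    and "t < length ord"
    and "kappa V E r s ord t = k"
    and "t = 0 \<or> kappa V E r s ord (t - 1) < k"
  shows "{SS. is_nucleus V E r s k SS} =
         links_of V E r s (set (take t ord)) ` sg_components V E r s (set (take t ord))"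
proof -
  interpret setk_t V E r s ord k t
    using assms by unfold_locales auto
  have "sg_components V E r s (set (take t ord)) = comp ` {R. R \<in> Kr_of V E r AA}"
    by (auto simp: sg_components_def comp_def)
  then have "links_of V E r s (set (take t ord)) ` sg_components V E r s (set (take t ord))
       = LL ` {R. R \<in> Kr_of V E r AA}"
    by (auto simp: LL_def image_image)
  then show ?thesis using main by simp
qed

end
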